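(* Fix a flow monoid $\mathbb{M}$. The set $\mathit{FG}$ of all flow graphs over $\mathbb{M}$, with the partial composition $*$, forms a separation algebra with unit set $\{h_\emptyset\}$, where $h_\emptyset=(\emptyset,\emptyset,\emptyset)$. That is, $*$ is commutative ($h_1\# h_2$ iff $h_2\# h_1$, and then $h_1*h_2=h_2*h_1$), associative ($h_2\# h_3$ and $h_1\#(h_2*h_3)$ hold iff $h_1\# h_2$ and $(h_1*h_2)\# h_3$ hold, and then $h_1*(h_2*h_3)=(h_1*h_2)*h_3$), and $h_\emptyset\# h$ with $h_\emptyset * h=h$ for every flow graph $h$.
   Context: A flow monoid is a commutative monoid $(\mathbb{M},+,0)$ such that the relation $n\le m :\iff \exists o.\ m=n+o$ is a partial order in which every ascending chain $K$ has a least upper bound $\bigsqcup K$, and $n+\bigsqcup K=\bigsqcup(n+K)$. A function $f:\mathbb{M}\to\mathbb{M}$ is continuous if it commutes with least upper bounds of ascending chains; $\mathcal{C}(\mathbb{M}\to\mathbb{M})$ is the set of continuous functions. Infinite sums denote least upper bounds of the ascending chain of finite partial sums; empty sums are $0$. A flow graph is a tuple $h=(X,E,\mathit{in})$ with $X\subseteq\mathbb{N}$ finite, edges $E:X\times\mathbb{N}\to\mathcal{C}(\mathbb{M}\to\mathbb{M})$, and inflow $\mathit{in}:(\mathbb{N}\setminus X)\times X\to\mathbb{M}$. Write $\mathit{in}_x=\sum_{y\in\mathbb{N}\setminus X}\mathit{in}(y,x)$. The flow $h.\mathit{flow}:X\to\mathbb{M}$ is the least function satisfying $\mathit{flow}(x)=\mathit{in}_x+\sum_{y\in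 X}E(y,x)(\mathit{flow}(y))$ for all $x\in X$. The outflow is $h.\mathit{out}:X\times(\mathbb{N}\setminus X)\to\mathbb{M}$, $h.\mathit{out}(x,y)=E(x,y)(h.\mathit{flow}(x))$. Composition: for $h_i=(X_i,E_i,\mathit{in}_i)$, write $h_1\#\#h_2$ if $X_1\cap X_2=\emptyset$ and for all $x\in X_1,y\in X_2$: $h_1.\mathit{out}(x,y)=\mathit{in}_2(x,y)$ and $h_2.\mathit{out}(y,x)=\mathit{in}_1(y,x)$. Then $h_1\uplus h_2=(X_1\uplus X_2,E_1\uplus E_2,(\mathit{in}_1\uplus\mathit{in}_2)|_{(\mathbb{N}\setminus(X_1\uplus X_2))\times(X_1\uplus X_2)})$. Composition is defined, written $h_1\# h_2$, iff $h_1\#\#h_2$ and $h_1.\mathit{flow}\uplus h_2.\mathit{flow}=(h_1\uplus h_2).\mathit{flow}$; in that case $h_1*h_2=h_1\uplus h_2$. *)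

theory Defs
  imports Main
begin

definition fm_le :: "'m::comm_monoid_add \<Rightarrow> 'm \<Rightarrow> bool" where
  "fm_le n m \<longleftrightarrow> (\<exists>k. m = n + k)"

definition fm_chain :: "(nat \<Rightarrow> 'm::comm_monoid_add) \<Rightarrow> bool" where
  "fm_chain K \<longleftrightarrow> (\<forall>i. fm_le (K i) (K (Suc i)))"

definition fm_is_lub :: "(nat \<Rightarrow> 'm::comm_monoid_add) \<Rightarrow> 'm \<Rightarrow> bool" where
  "fm_is_lub K l \<longleftrightarrow> (\<forall>i. fm_le (K i) l) \<and> (\<forall>u. (\<forall>i. fm_le (K i) u) \<longrightarrow> fm_le l u)"

definition fm_Lub :: "(nat \<Rightarrow> 'm::comm_monoid_add) \<Rightarrow> 'm" where
  "fm_Lub K = (THE l. fm_is_lub K l)"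

definition flow_monoid :: "'m::comm_monoid_add itself \<Rightarrow> bool" where
  "flow_monoid _ \<longleftrightarrow>
     (\<forall>a b::'m. fm_le a b \<longrightarrow> fm_le b a \<longrightarrow> a = b)
   \<and> (\<forall>K::nat \<Rightarrow> 'm. fm_chain K \<longrightarrow> (\<exists>l. fm_is_lub K l))
   \<and> (\<forall>(K::nat \<Rightarrow> 'm) n. fm_chain K \<longrightarrow> n + fm_Lub K = fm_Lub (\<lambda>i. n + K i))"

definition fm_continuous :: "('m::comm_monoid_add \<Rightarrow> 'm) \<Rightarrow> bool" where
  "fm_continuous f \<longleftrightarrow> (\<forall>K. fm_chain K \<longrightarrow> fm_is_lub (\<lambda>i. f (K i)) (f (fm_Lub K)))"

text \<open>A flow graph (X, E, in). Partial functions are represented as total functions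
  that are undefined outside their domain (extensional representation).\<close>
record 'm flow_graph =
  nodes :: "nat set"
  edge :: "nat \<Rightarrow> nat \<Rightarrow> 'm \<Rightarrow> 'm"
  inf :: "nat \<Rightarrow> nat \<Rightarrow> 'm"

definition FG :: "'m::comm_monoid_add flow_graph set" where
  "FG = {h. finite (nodes h)
          \<and> (\<forall>x\<in>nodes h. \<forall>y. fm_continuous (edge h x y))
          \<and> (\<forall>x y. x \<notin> nodes h \<longrightarrow> edge h x y = undefined)
          \<and> (\<forall>y x. \<not> (y \<notin> nodes h \<and> x \<in> nodes h) \<longrightarrow> inf h y x = undefined)}"

text \<open>in_x = sum over y in N - X of in(y,x): the lub of the chain of partial sums.\<close>
definition inflow :: "'m::comm_monoid_add flow_graph \<Rightarrow> nat \<Rightarrow> 'm" where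
  "inflow h x = fm_Lub (\<lambda>n. \<Sum>y\<in>{..<n} - nodes h. inf h y x)"

definition flow_eqs :: "'m::comm_monoid_add flow_graph \<Rightarrow> (nat \<Rightarrow> 'm) \<Rightarrow> bool" where
  "flow_eqs h f \<longleftrightarrow> (\<forall>x\<in>nodes h. f x = inflow h x + (\<Sum>y\<in>nodes h. edge h y x (f y)))"

definition flow :: "'m::comm_monoid_add flow_graph \<Rightarrow> nat \<Rightarrow> 'm" where
  "flow h = (THE f. (\<forall>x. x \<notin> nodes h \<longrightarrow> f x = undefined) \<and> flow_eqs h f
                 \<and> (\<forall>g. flow_eqs h g \<longrightarrow> (\<forall>x\<in>nodes h. fm_le (f x) (g x))))"

definition outf :: "'m::comm_monoid_add flow_graph \<Rightarrow> nat \<Rightarrow> nat \<Rightarrow> 'm" where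
  "outf h x y = (if x \<in> nodes h \<and> y \<notin> nodes h then edge h x y (flow h x) else undefined)"

definition fg_compat :: "'m::comm_monoid_add flow_graph \<Rightarrow> 'm flow_graph \<Rightarrow> bool" (infix "##" 50) where
  "h1 ## h2 \<longleftrightarrow> nodes h1 \<inter> nodes h2 = {}
     \<and> (\<forall>x\<in>nodes h1. \<forall>y\<in>nodes h2. outf h1 x y = inf h2 x y \<and> outf h2 y x = inf h1 y x)"

definition fg_union :: "'m::comm_monoid_add flow_graph \<Rightarrow> 'm flow_graph \<Rightarrow> 'm flow_graph" where
  "fg_union h1 h2 =
     \<lparr> nodes = nodes h1 \<union> nodes h2,
       edge = (\<lambda>x y. if x \<in> nodes h1 then edge h1 x y else edge h2 x y),
       inf = (\<lambda>y x. if y \<notin> nodes h1 \<union> nodes h2 \<and> x \<in> nodes h1 \<union> nodes h2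
                    then (if x \<in> nodes h1 then inf h1 y x else inf h2 y x)
                    else undefined) \<rparr>"

definition fun_union :: "nat set \<Rightarrow> (nat \<Rightarrow> 'a) \<Rightarrow> (nat \<Rightarrow> 'a) \<Rightarrow> nat \<Rightarrow> 'a" where
  "fun_union X f g = (\<lambda>x. if x \<in> X then f x else g x)"

definition fg_defined :: "'m::comm_monoid_add flow_graph \<Rightarrow> 'm flow_graph \<Rightarrow> bool" (infix "#" 50) where
  "h1 # h2 \<longleftrightarrow> h1 ## h2 \<and> fun_union (nodes h1) (flow h1) (flow h2) = flow (fg_union h1 h2)"

definition fg_comp :: "'m::comm_monoid_add flow_graph \<Rightarrow> 'm flow_graph \<Rightarrow> 'm flow_graph" (infixl "\<star>" 70) where
  "h1 \<star> h2 = fg_union h1 h2"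

definition fg_empty :: "'m::comm_monoid_add flow_graph" where
  "fg_empty = \<lparr> nodes = {}, edge = (\<lambda>_ _. undefined), inf = (\<lambda>_ _. undefined) \<rparr>"

end

theory Submission
  imports Defs
begin


lemma le_refl: "fm_le a a" unfolding fm_le_def by (rule exI[of _ 0]) simp
lemma le_trans: "fm_le a b \<Longrightarrow> fm_le b c \<Longrightarrow> fm_le a c"
  unfolding fm_le_def by (metis add.assoc)
lemma le_add: "fm_le a (a + b)" unfolding fm_le_def by blast
lemma le_zero: "fm_le 0 a" unfolding fm_le_def by simp
lemma add_mono': "fm_le a b \<Longrightarrow> fm_le c d \<Longrightarrow> fm_le (a + c) (b + d)"
  unfolding fm_le_def by (metis add.assoc add.commute)
lemma sum_mono': "(\<And>i. i \<in> A \<Longrightarrow> fm_le (f i) (g i)) \<Longrightarrow> fm_le (sum f A) (sum g A)"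
proof (induction A rule: infinite_finite_induct)
  case (infinite A) then show ?case by (simp add: le_refl)
next
  case empty then show ?case by (simp add: le_refl)
next
  case (insert x F) then show ?case by (simp add: add_mono')
qed

primrec kit :: "nat set \<Rightarrow> (nat \<Rightarrow> nat \<Rightarrow> 'm::comm_monoid_add \<Rightarrow> 'm) \<Rightarrow> (nat \<Rightarrow> 'm) \<Rightarrow> nat \<Rightarrow> nat \<Rightarrow> 'm" where
  "kit X E \<iota> 0 = (\<lambda>x. 0)"
| "kit X E \<iota> (Suc n) = (\<lambda>x. \<iota> x + (\<Sum>y\<in>X. E y x (kit X E \<iota> n y)))"

definition pre_fp :: "nat set \<Rightarrow> (nat \<Rightarrow> nat \<Rightarrow> 'm::comm_monoid_add \<Rightarrow> 'm) \<Rightarrow> (nat \<Rightarrow> 'm) \<Rightarrow> (nat \<Rightarrow> 'm) \<Rightarrow> bool" where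
  "pre_fp X E \<iota> k \<longleftrightarrow> (\<forall>x\<in>X. fm_le (\<iota> x + (\<Sum>y\<in>X. E y x (k y))) (k x))"

context
  fixes T :: "'m::comm_monoid_add itself"
  assumes fm: "flow_monoid TYPE('m)"
begin

lemma antisym: "fm_le (a::'m) b \<Longrightarrow> fm_le b a \<Longrightarrow> a = b"
  using fm unfolding flow_monoid_def by blast

lemma lub_unique: "fm_is_lub (K::nat\<Rightarrow>'m) l \<Longrightarrow> fm_Lub K = l"
  unfolding fm_Lub_def
  by (rule the_equality) (auto simp: fm_is_lub_def intro: antisym)

lemma lub_ex: "fm_chain (K::nat\<Rightarrow>'m) \<Longrightarrow> fm_is_lub K (fm_Lub K)"
proof -
  assume "fm_chain K"
  then obtain l where "fm_is_lub K l" using fm unfolding flow_monoid_def by blast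
  then show ?thesis using lub_unique by simp
qed

lemma lub_upper: "fm_chain (K::nat\<Rightarrow>'m) \<Longrightarrow> fm_le (K i) (fm_Lub K)"
  using lub_ex unfolding fm_is_lub_def by blast

lemma lub_least: "fm_chain (K::nat\<Rightarrow>'m) \<Longrightarrow> (\<And>i. fm_le (K i) u) \<Longrightarrow> fm_le (fm_Lub K) u"
  using lub_ex unfolding fm_is_lub_def by blast

lemma lub_add: "fm_chain (K::nat\<Rightarrow>'m) \<Longrightarrow> n + fm_Lub K = fm_Lub (\<lambda>i. n + K i)"
  using fm unfolding flow_monoid_def by blast

lemma chain_mono: "fm_chain (K::nat\<Rightarrow>'m) \<Longrightarrow> i \<le> j \<Longrightarrow> fm_le (K i) (K j)"
proof (induction j)
  case 0 then show ?case by (simp add: le_refl)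
next
  case (Suc j)
  then show ?case
    by (metis fm_chain_def le_Suc_eq le_refl le_trans)
qed

lemma lub_const: "fm_Lub (\<lambda>i. c::'m) = c"
  by (rule lub_unique) (auto simp: fm_is_lub_def le_refl)

lemma cont_mono: "fm_continuous (f::'m\<Rightarrow>'m) \<Longrightarrow> fm_le a b \<Longrightarrow> fm_le (f a) (f b)"
proof -
  assume c: "fm_continuous f" and ab: "fm_le a b"
  define K where "K = (\<lambda>i::nat. if i = 0 then a else b)"
  have ch: "fm_chain K" unfolding fm_chain_def K_def using ab by (auto simp: le_refl)
  have "fm_is_lub K b" unfolding fm_is_lub_def K_def using ab
    by (auto simp: le_refl)
  then have "fm_Lub K = b" by (rule lub_unique)
  moreover have "fm_is_lub (\<lambda>i. f (K i)) (f (fm_Lub K))" using c ch unfolding fm_continuous_def by blast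
  ultimately have "fm_le (f (K 0)) (f b)" unfolding fm_is_lub_def by metis
  then show ?thesis by (simp add: K_def)
qed

lemma cont_chain: "fm_continuous (f::'m\<Rightarrow>'m) \<Longrightarrow> fm_chain K \<Longrightarrow> fm_chain (\<lambda>i. f (K i))"
  unfolding fm_chain_def using cont_mono by (metis fm_chain_def)

lemma cont_lub: "fm_continuous (f::'m\<Rightarrow>'m) \<Longrightarrow> fm_chain K \<Longrightarrow> f (fm_Lub K) = fm_Lub (\<lambda>i. f (K i))"
  unfolding fm_continuous_def using lub_unique by metis

lemma chain_plus: "fm_chain (a::nat\<Rightarrow>'m) \<Longrightarrow> fm_chain b \<Longrightarrow> fm_chain (\<lambda>i. a i + b i)"
  unfolding fm_chain_def by (simp add: add_mono')

lemma lub_plus: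
  assumes a: "fm_chain (a::nat\<Rightarrow>'m)" and b: "fm_chain b"
  shows "fm_Lub (\<lambda>i. a i + b i) = fm_Lub a + fm_Lub b"
proof (rule lub_unique, unfold fm_is_lub_def, intro conjI allI impI)
  fix i show "fm_le (a i + b i) (fm_Lub a + fm_Lub b)"
    by (simp add: a b add_mono' lub_upper)
next
  fix u assume u: "\<forall>i. fm_le (a i + b i) u"
  have "fm_le (a i + fm_Lub b) u" for i
  proof -
    have "fm_le (a i + b j) u" for j
    proof -
      have "fm_le (a i + b j) (a (max i j) + b (max i j))"
        by (intro add_mono' chain_mono[OF a] chain_mono[OF b]) auto
      then show ?thesis using u le_trans by blast
    qed
    then have "fm_le (fm_Lub (\<lambda>j. a i + b j)) u"
      by (intro lub_least chain_plus[OF _ b]) (auto simp: fm_chain_def le_refl)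
    then show ?thesis using lub_add[OF b] by simp
  qed
  then have "fm_le (fm_Lub b + a i) u" for i by (simp add: add.commute)
  then have "fm_le (fm_Lub (\<lambda>i. fm_Lub b + a i)) u"
    by (intro lub_least chain_plus[OF _ a]) (auto simp: fm_chain_def le_refl)
  then show "fm_le (fm_Lub a + fm_Lub b) u" using lub_add[OF a, of "fm_Lub b"] by (metis add.commute)
qed

lemma chain_sum: "(\<And>y. y \<in> A \<Longrightarrow> fm_chain (K y)) \<Longrightarrow> fm_chain (\<lambda>i. \<Sum>y\<in>A. (K y i::'m))"
  unfolding fm_chain_def by (simp add: sum_mono')

lemma lub_sum:
  fixes K :: "nat \<Rightarrow> nat \<Rightarrow> 'm"
  shows "finite A \<Longrightarrow> (\<And>y. y \<in> A \<Longrightarrow> fm_chain (K y)) \<Longrightarrow>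
   fm_Lub (\<lambda>i. \<Sum>y\<in>A. K y i) = (\<Sum>y\<in>A. fm_Lub (K y))"
proof (induction A rule: finite_induct)
  case empty then show ?case by (simp add: lub_const)
next
  case (insert x F)
  then show ?case
    by (simp add: lub_plus chain_sum)
qed

lemma lub_shift:
  assumes K: "fm_chain (K::nat\<Rightarrow>'m)"
  shows "fm_Lub (\<lambda>i. K (i + N)) = fm_Lub K"
proof (rule lub_unique, unfold fm_is_lub_def, intro conjI allI impI)
  fix i show "fm_le (K (i + N)) (fm_Lub K)" by (rule lub_upper[OF K])
next
  fix u assume u: "\<forall>i. fm_le (K (i + N)) u"
  have ch: "fm_chain (\<lambda>i. K (i + N))" using K unfolding fm_chain_def by simp
  have "fm_le (K i) u" for i
    using chain_mono[OF K, of i "i + N"] u le_trans by auto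
  then show "fm_le (fm_Lub K) u" by (rule lub_least[OF K])
qed


lemma chain_psum: "fm_chain (\<lambda>n. \<Sum>y\<in>{..<n} - A. (g y::'m))"
  unfolding fm_chain_def
proof
  fix n
  show "fm_le (\<Sum>y\<in>{..<n} - A. g y) (\<Sum>y\<in>{..<Suc n} - A. g y)"
  proof (cases "n \<in> A")
    case True
    then have "{..<Suc n} - A = {..<n} - A" by (auto simp: less_Suc_eq)
    then show ?thesis by (simp add: le_refl)
  next
    case False
    then have "{..<Suc n} - A = insert n ({..<n} - A)" by auto
    then have "(\<Sum>y\<in>{..<Suc n} - A. g y) = (\<Sum>y\<in>{..<n} - A. g y) + g n"
      using False by (simp add: add.commute)
    then show ?thesis by (simp add: le_add)
  qed
qed

lemma isum_split:
  assumes B: "finite B" "B \<subseteq> A"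
  shows "fm_Lub (\<lambda>n. \<Sum>y\<in>{..<n} - (A - B). (g y::'m)) = fm_Lub (\<lambda>n. \<Sum>y\<in>{..<n} - A. g y) + sum g B"
proof -
  obtain N where "\<forall>n\<in>B. n < N" using B(1) by (auto simp: finite_nat_set_iff_bounded)
  then have N: "B \<subseteq> {..<N}" by auto
  have eq: "(\<Sum>y\<in>{..<n + N} - (A - B). g y) = sum g B + (\<Sum>y\<in>{..<n + N} - A. g y)" for n
  proof -
    have "{..<n + N} - (A - B) = B \<union> ({..<n + N} - A)" using N B(2) by auto
    moreover have "B \<inter> ({..<n + N} - A) = {}" using B(2) by auto
    ultimately show ?thesis using B(1) by (simp add: sum.union_disjoint)
  qed
  have ch: "fm_chain (\<lambda>n. \<Sum>y\<in>{..<n + N} - A. g y)"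
    using chain_psum[where A=A and g=g] unfolding fm_chain_def by simp
  have "fm_Lub (\<lambda>n. \<Sum>y\<in>{..<n} - (A - B). g y) = fm_Lub (\<lambda>n. \<Sum>y\<in>{..<n + N} - (A - B). g y)"
    by (rule lub_shift[OF chain_psum, symmetric])
  also have "\<dots> = fm_Lub (\<lambda>n. sum g B + (\<Sum>y\<in>{..<n + N} - A. g y))" by (simp only: eq)
  also have "\<dots> = sum g B + fm_Lub (\<lambda>n. \<Sum>y\<in>{..<n + N} - A. g y)"
    by (rule lub_add[OF ch, symmetric])
  also have "fm_Lub (\<lambda>n. \<Sum>y\<in>{..<n + N} - A. g y) = fm_Lub (\<lambda>n. \<Sum>y\<in>{..<n} - A. g y)"
    by (rule lub_shift[OF chain_psum])
  finally show ?thesis by (simp add: add.commute)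
qed

lemma kit_chain:
  fixes E :: "nat \<Rightarrow> nat \<Rightarrow> 'm \<Rightarrow> 'm"
  assumes cont: "\<And>y x. y \<in> X \<Longrightarrow> fm_continuous (E y x)"
  shows "fm_chain (\<lambda>n. kit X E \<iota> n x)"
proof -
  have "\<forall>x. fm_le (kit X E \<iota> n x) (kit X E \<iota> (Suc n) x)" for n
  proof (induction n)
    case 0 then show ?case by (simp add: le_zero)
  next
    case (Suc n)
    show ?case
    proof
      fix x
      have "fm_le (\<Sum>y\<in>X. E y x (kit X E \<iota> n y)) (\<Sum>y\<in>X. E y x (kit X E \<iota> (Suc n) y))"
        by (rule sum_mono', rule cont_mono[OF cont]) (use Suc in auto)
      then show "fm_le (kit X E \<iota> (Suc n) x) (kit X E \<iota> (Suc (Suc n)) x)"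
        unfolding kit.simps by (rule add_mono'[OF le_refl])
    qed
  qed
  then show ?thesis unfolding fm_chain_def by blast
qed

lemma kit_fix:
  fixes E :: "nat \<Rightarrow> nat \<Rightarrow> 'm \<Rightarrow> 'm"
  assumes fin: "finite X" and cont: "\<And>y x. y \<in> X \<Longrightarrow> fm_continuous (E y x)"
  shows "fm_Lub (\<lambda>n. kit X E \<iota> n x) = \<iota> x + (\<Sum>y\<in>X. E y x (fm_Lub (\<lambda>n. kit X E \<iota> n y)))"
proof -
  have "(\<Sum>y\<in>X. E y x (fm_Lub (\<lambda>n. kit X E \<iota> n y))) = (\<Sum>y\<in>X. fm_Lub (\<lambda>n. E y x (kit X E \<iota> n y)))"
    by (rule sum.cong) (auto simp: cont_lub[OF cont kit_chain[OF cont]])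
  also have "\<dots> = fm_Lub (\<lambda>n. \<Sum>y\<in>X. E y x (kit X E \<iota> n y))"
    by (rule lub_sum[symmetric, OF fin]) (auto intro: cont_chain[OF cont kit_chain[OF cont]])
  finally have "\<iota> x + (\<Sum>y\<in>X. E y x (fm_Lub (\<lambda>n. kit X E \<iota> n y))) = fm_Lub (\<lambda>n. kit X E \<iota> (n + 1) x)"
    using lub_add[OF chain_sum, of X "\<lambda>y n. E y x (kit X E \<iota> n y)" "\<iota> x"]
      cont_chain[OF cont kit_chain[OF cont]] by simp
  also have "\<dots> = fm_Lub (\<lambda>n. kit X E \<iota> n x)" by (rule lub_shift[OF kit_chain[OF cont]])
  finally show ?thesis by simp
qed

lemma kit_least:
  fixes E :: "nat \<Rightarrow> nat \<Rightarrow> 'm \<Rightarrow> 'm"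
  assumes cont: "\<And>y x. y \<in> X \<Longrightarrow> fm_continuous (E y x)"
    and pf: "pre_fp X E \<iota> k" and x: "x \<in> X"
  shows "fm_le (fm_Lub (\<lambda>n. kit X E \<iota> n x)) (k x)"
proof -
  have hk: "\<forall>x\<in>X. fm_le (kit X E \<iota> n x) (k x)" for n
  proof (induction n)
    case 0 then show ?case by (simp add: le_zero)
  next
    case (Suc n)
    show ?case
    proof
      fix x assume x: "x \<in> X"
      have "fm_le (\<Sum>y\<in>X. E y x (kit X E \<iota> n y)) (\<Sum>y\<in>X. E y x (k y))"
        by (rule sum_mono', rule cont_mono[OF cont]) (use Suc in auto)
      then have "fm_le (kit X E \<iota> (Suc n) x) (\<iota> x + (\<Sum>y\<in>X. E y x (k y)))"
        unfolding kit.simps by (rule add_mono'[OF le_refl])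
      moreover have "fm_le (\<iota> x + (\<Sum>y\<in>X. E y x (k y))) (k x)"
        using pf x unfolding pre_fp_def by blast
      ultimately show "fm_le (kit X E \<iota> (Suc n) x) (k x)" by (rule le_trans)
    qed
  qed
  have ch: "fm_chain (\<lambda>n. kit X E \<iota> n x)" by (rule kit_chain[OF cont])
  show ?thesis by (rule lub_least[OF ch]) (use hk x in blast)
qed

lemma flow_props:
  fixes h :: "'m flow_graph"
  assumes h: "h \<in> FG"
  shows "(\<forall>x. x \<notin> nodes h \<longrightarrow> flow h x = undefined)
       \<and> (\<forall>x\<in>nodes h. flow h x = inflow h x + (\<Sum>y\<in>nodes h. edge h y x (flow h y)))
       \<and> (\<forall>k. pre_fp (nodes h) (edge h) (inflow h) k \<longrightarrow> (\<forall>x\<in>nodes h. fm_le (flow h x) (k x)))"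
proof -
  let ?X = "nodes h" and ?E = "edge h" and ?i = "inflow h :: nat \<Rightarrow> 'm"
  have fin: "finite ?X" and cont: "\<And>y x. y \<in> ?X \<Longrightarrow> fm_continuous (?E y x)"
    using h unfolding FG_def by auto
  define L where "L = (\<lambda>x. if x \<in> ?X then fm_Lub (\<lambda>n. kit ?X ?E ?i n x) else undefined)"
  have fixp: "\<forall>x\<in>?X. L x = ?i x + (\<Sum>y\<in>?X. ?E y x (L y))"
  proof
    fix x assume "x \<in> ?X"
    have se: "(\<Sum>y\<in>?X. ?E y x (fm_Lub (\<lambda>n. kit ?X ?E ?i n y))) = (\<Sum>y\<in>?X. ?E y x (L y))"
      by (rule sum.cong) (auto simp: L_def)
    have "L x = fm_Lub (\<lambda>n. kit ?X ?E ?i n x)" using \<open>x \<in> ?X\<close> by (simp add: L_def)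
    also have "\<dots> = ?i x + (\<Sum>y\<in>?X. ?E y x (fm_Lub (\<lambda>n. kit ?X ?E ?i n y)))"
      by (rule kit_fix[OF fin cont])
    also have "\<dots> = ?i x + (\<Sum>y\<in>?X. ?E y x (L y))" by (simp only: se)
    finally show "L x = ?i x + (\<Sum>y\<in>?X. ?E y x (L y))" .
  qed
  have least: "\<forall>k. pre_fp ?X ?E ?i k \<longrightarrow> (\<forall>x\<in>?X. fm_le (L x) (k x))"
    using kit_least[OF cont] by (auto simp: L_def)
  have P: "(\<forall>x. x \<notin> ?X \<longrightarrow> L x = undefined) \<and> flow_eqs h L
                 \<and> (\<forall>g. flow_eqs h g \<longrightarrow> (\<forall>x\<in>?X. fm_le (L x) (g x)))"
  proof (intro conjI allI impI ballI)
    fix x assume "x \<notin> ?X" then show "L x = undefined" by (simp add: L_def)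
  next
    show "flow_eqs h L" using fixp unfolding flow_eqs_def by blast
  next
    fix g x assume "flow_eqs h g" "x \<in> ?X"
    then have "pre_fp ?X ?E ?i g" unfolding flow_eqs_def pre_fp_def
    proof (intro ballI)
      fix z assume "\<forall>x\<in>?X. g x = ?i x + (\<Sum>y\<in>?X. ?E y x (g y))" "z \<in> ?X"
      then have eq: "?i z + (\<Sum>y\<in>?X. ?E y z (g y)) = g z" by simp
      show "fm_le (?i z + (\<Sum>y\<in>?X. ?E y z (g y))) (g z)" unfolding eq by (rule le_refl)
    qed
    then show "fm_le (L x) (g x)" using least \<open>x \<in> ?X\<close> by blast
  qed
  have "flow h = L"
    unfolding flow_def
  proof (rule the_equality)
    show "(\<forall>x. x \<notin> ?X \<longrightarrow> L x = undefined) \<and> flow_eqs h L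
                 \<and> (\<forall>g. flow_eqs h g \<longrightarrow> (\<forall>x\<in>?X. fm_le (L x) (g x)))" by (rule P)
  next
    fix f assume f: "(\<forall>x. x \<notin> ?X \<longrightarrow> f x = undefined) \<and> flow_eqs h f
                 \<and> (\<forall>g. flow_eqs h g \<longrightarrow> (\<forall>x\<in>?X. fm_le (f x) (g x)))"
    show "f = L"
    proof
      fix x show "f x = L x"
      proof (cases "x \<in> ?X")
        case True
        have "fm_le (f x) (L x)" using f P True by blast
        moreover have "fm_le (L x) (f x)" using f P True by blast
        ultimately show ?thesis by (rule antisym)
      next
        case False
        have "f x = undefined" using f False by blast
        moreover have "L x = undefined" using P False by blast
        ultimately show ?thesis by simp
      qed
    qed
  qed
  have A1: "\<forall>x. x \<notin> ?X \<longrightarrow> flow h x = undefined" unfolding \<open>flow h = L\<close> using P by blast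
  have A2: "\<forall>x\<in>?X. flow h x = ?i x + (\<Sum>y\<in>?X. ?E y x (flow h y))" unfolding \<open>flow h = L\<close> by (rule fixp)
  have A3: "\<forall>k. pre_fp ?X ?E ?i k \<longrightarrow> (\<forall>x\<in>?X. fm_le (flow h x) (k x))" unfolding \<open>flow h = L\<close> by (rule least)
  show ?thesis using A1 A2 A3 by blast
qed

end


context
  fixes T :: "'m::comm_monoid_add itself"
  assumes fm: "flow_monoid TYPE('m)"
begin

lemma restrict:
  fixes f g \<iota> \<iota>' :: "nat \<Rightarrow> 'm" and E E' :: "nat \<Rightarrow> nat \<Rightarrow> 'm \<Rightarrow> 'm"
  assumes fin: "finite X" and SX: "S \<subseteq> X"
    and cont: "\<And>y x. y \<in> X \<Longrightarrow> fm_continuous (E y x)"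
    and fixf: "\<forall>x\<in>X. f x = \<iota> x + (\<Sum>y\<in>X. E y x (f y))"
    and leastf: "\<forall>k. pre_fp X E \<iota> k \<longrightarrow> (\<forall>x\<in>X. fm_le (f x) (k x))"
    and fixg: "\<forall>x\<in>S. g x = \<iota>' x + (\<Sum>y\<in>S. E' y x (g y))"
    and leastg: "\<forall>k. pre_fp S E' \<iota>' k \<longrightarrow> (\<forall>x\<in>S. fm_le (g x) (k x))"
    and EE: "\<And>y x. y \<in> S \<Longrightarrow> x \<in> S \<Longrightarrow> E' y x = E y x"
    and ii: "\<And>x. x \<in> S \<Longrightarrow> \<iota>' x = \<iota> x + (\<Sum>y\<in>X - S. E y x (f y))"
  shows "\<forall>x\<in>S. g x = f x"
proof -
  have sp: "(\<Sum>y\<in>X. E y x (k y)) = (\<Sum>y\<in>X - S. E y x (k y)) + (\<Sum>y\<in>S. E y x (k y))" for x k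
    using sum.subset_diff[OF SX fin] by blast
  have "pre_fp S E' \<iota>' f"
    unfolding pre_fp_def
  proof
    fix x assume x: "x \<in> S"
    have "\<iota>' x + (\<Sum>y\<in>S. E' y x (f y)) = \<iota> x + ((\<Sum>y\<in>X - S. E y x (f y)) + (\<Sum>y\<in>S. E y x (f y)))"
      using ii[OF x] EE[OF _ x] by (simp add: add.assoc)
    also have "\<dots> = f x" using fixf x SX sp by auto
    finally show "fm_le (\<iota>' x + (\<Sum>y\<in>S. E' y x (f y))) (f x)" by (simp add: le_refl)
  qed
  then have gf: "\<forall>x\<in>S. fm_le (g x) (f x)" using leastg by blast
  define k where "k = (\<lambda>y. if y \<in> S then g y else f y)"
  have kf: "\<forall>y\<in>X. fm_le (k y) (f y)" using gf by (auto simp: k_def le_refl)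
  have sk: "(\<Sum>y\<in>X. E y x (k y)) = (\<Sum>y\<in>X - S. E y x (f y)) + (\<Sum>y\<in>S. E y x (g y))" for x
    unfolding sp[of x k] by (auto simp: k_def intro!: arg_cong2[where f="(+)"] sum.cong)
  have "pre_fp X E \<iota> k"
    unfolding pre_fp_def
  proof
    fix x assume x: "x \<in> X"
    show "fm_le (\<iota> x + (\<Sum>y\<in>X. E y x (k y))) (k x)"
    proof (cases "x \<in> S")
      case True
      have "\<iota> x + (\<Sum>y\<in>X. E y x (k y)) = \<iota>' x + (\<Sum>y\<in>S. E' y x (g y))"
        using ii[OF True] EE[OF _ True] by (simp add: sk add.assoc)
      also have "\<dots> = k x" using fixg True by (simp add: k_def)
      finally show ?thesis by (simp add: le_refl)
    next
      case False
      have "fm_le (\<iota> x + (\<Sum>y\<in>X. E y x (k y))) (\<iota> x + (\<Sum>y\<in>X. E y x (f y)))"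
        by (rule add_mono'[OF le_refl], rule sum_mono', rule cont_mono[OF fm cont]) (use kf in auto)
      then show ?thesis using fixf x False by (simp add: k_def)
    qed
  qed
  then have "\<forall>x\<in>X. fm_le (f x) (k x)" using leastf by blast
  then show ?thesis
  proof (intro ballI)
    fix x assume fk: "\<forall>x\<in>X. fm_le (f x) (k x)" and x: "x \<in> S"
    have "x \<in> X" using x SX by blast
    then have "fm_le (f x) (k x)" using fk by blast
    then have fg: "fm_le (f x) (g x)" using x by (simp add: k_def)
    have "fm_le (g x) (f x)" using gf x by blast
    from this fg
    show "g x = f x" by (rule antisym[OF fm])
  qed
qed

end



lemma FG_fin: "h \<in> FG \<Longrightarrow> finite (nodes h)" unfolding FG_def by blast
lemma FG_cont: "h \<in> FG \<Longrightarrow> x \<in> nodes h \<Longrightarrow> fm_continuous (edge h x y)" unfolding FG_def by blast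
lemma FG_edge: "h \<in> FG \<Longrightarrow> x \<notin> nodes h \<Longrightarrow> edge h x y = undefined" unfolding FG_def by blast
lemma FG_inf: "h \<in> FG \<Longrightarrow> \<not> (y \<notin> nodes h \<and> x \<in> nodes h) \<Longrightarrow> inf h y x = undefined" unfolding FG_def by blast

lemma nodes_union[simp]: "nodes (fg_union h1 h2) = nodes h1 \<union> nodes h2" by (simp add: fg_union_def)
lemma edge_union[simp]: "edge (fg_union h1 h2) x y = (if x \<in> nodes h1 then edge h1 x y else edge h2 x y)"
  by (simp add: fg_union_def)
lemma inf_union[simp]: "inf (fg_union h1 h2) y x = (if y \<notin> nodes h1 \<union> nodes h2 \<and> x \<in> nodes h1 \<union> nodes h2
                    then (if x \<in> nodes h1 then inf h1 y x else inf h2 y x) else undefined)"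
  by (simp add: fg_union_def)

lemma union_FG: "h1 \<in> FG \<Longrightarrow> h2 \<in> FG \<Longrightarrow> fg_union h1 h2 \<in> FG"
  unfolding FG_def by auto

lemma empty_FG: "fg_empty \<in> FG" unfolding FG_def fg_empty_def by simp

lemma fg_eqI:
  fixes h h' :: "'m::comm_monoid_add flow_graph"
  shows "nodes h = nodes h' \<Longrightarrow> edge h = edge h' \<Longrightarrow> inf h = inf h' \<Longrightarrow> h = h'"
  by (cases h, cases h') simp

lemma union_empty: "h \<in> FG \<Longrightarrow> fg_union fg_empty h = h"
  by (rule fg_eqI) (auto simp: fg_empty_def fun_eq_iff intro: FG_inf[symmetric])

lemma union_assoc: "fg_union h1 (fg_union h2 h3) = fg_union (fg_union h1 h2) h3"
  by (rule fg_eqI) (auto simp: fun_eq_iff)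

lemma union_comm: "h1 \<in> FG \<Longrightarrow> h2 \<in> FG \<Longrightarrow> nodes h1 \<inter> nodes h2 = {} \<Longrightarrow> fg_union h1 h2 = fg_union h2 h1"
  by (rule fg_eqI) (auto simp: fun_eq_iff FG_edge)

lemma compat_sym: "fg_compat h1 h2 \<longleftrightarrow> fg_compat h2 h1"
  unfolding fg_compat_def by blast

lemma outf_eq: "x \<in> nodes h \<Longrightarrow> y \<notin> nodes h \<Longrightarrow> outf h x y = edge h x y (flow h x)"
  by (simp add: outf_def)

context
  fixes T :: "'m::comm_monoid_add itself"
  assumes fm: "flow_monoid TYPE('m)"
begin

lemma flow_undef: "(h::'m flow_graph) \<in> FG \<Longrightarrow> x \<notin> nodes h \<Longrightarrow> flow h x = undefined"
  using flow_props[OF fm] by blast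

lemma defined_sym:
  fixes h1 h2 :: "'m flow_graph"
  assumes "h1 \<in> FG" "h2 \<in> FG" "fg_defined h1 h2"
  shows "fg_defined h2 h1"
proof -
  have d: "nodes h1 \<inter> nodes h2 = {}" and c: "fg_compat h1 h2"
    and fl: "fun_union (nodes h1) (flow h1) (flow h2) = flow (fg_union h1 h2)"
    using assms(3) unfolding fg_defined_def fg_compat_def by auto
  have "fun_union (nodes h2) (flow h2) (flow h1) = fun_union (nodes h1) (flow h1) (flow h2)"
    using d by (auto simp: fun_union_def fun_eq_iff flow_undef[OF assms(1)] flow_undef[OF assms(2)])
  then show ?thesis using fl c union_comm[OF assms(1,2) d]
    unfolding fg_defined_def by (simp add: compat_sym)
qed


lemma forward:
  fixes h1 h2 h3 :: "'m flow_graph"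
  assumes F1: "h1 \<in> FG" and F2: "h2 \<in> FG" and F3: "h3 \<in> FG"
    and A: "fg_defined h2 h3" and B: "fg_defined h1 (fg_union h2 h3)"
  shows "fg_defined h1 h2 \<and> fg_defined (fg_union h1 h2) h3"
proof -
  define h23 where "h23 = fg_union h2 h3"
  define h12 where "h12 = fg_union h1 h2"
  define U where "U = fg_union h1 h23"
  have F23: "h23 \<in> FG" and F12: "h12 \<in> FG" and FU: "U \<in> FG"
    using F1 F2 F3 by (auto simp: h23_def h12_def U_def union_FG)
  have d23: "nodes h2 \<inter> nodes h3 = {}"
    and c23: "\<And>x y. x \<in> nodes h2 \<Longrightarrow> y \<in> nodes h3 \<Longrightarrow> outf h2 x y = inf h3 x y \<and> outf h3 y x = inf h2 y x"
    and fl23: "fun_union (nodes h2) (flow h2) (flow h3) = flow h23"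
    using A unfolding fg_defined_def fg_compat_def h23_def by auto
  have d1: "nodes h1 \<inter> (nodes h2 \<union> nodes h3) = {}"
    and c1: "\<And>x y. x \<in> nodes h1 \<Longrightarrow> y \<in> nodes h2 \<union> nodes h3 \<Longrightarrow> outf h1 x y = inf h23 x y \<and> outf h23 y x = inf h1 y x"
    and fl1: "fun_union (nodes h1) (flow h1) (flow h23) = flow U"
    using B unfolding fg_defined_def fg_compat_def h23_def U_def by auto
  define f where "f = flow U"
  have f23_3: "flow h23 y = flow h3 y" if "y \<in> nodes h3" for y
    using fl23[symmetric] d23 that by (auto simp: fun_union_def)
  have f23_2: "flow h23 y = flow h2 y" if "y \<in> nodes h2" for y
    using fl23[symmetric] that by (auto simp: fun_union_def)
  have f1: "f x = flow h1 x" if "x \<in> nodes h1" for x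
    using fl1[symmetric] that by (auto simp: fun_union_def f_def)
  have f2: "f x = flow h2 x" if "x \<in> nodes h2" for x
    using fl1[symmetric] d1 that f23_2 by (auto simp: fun_union_def f_def)
  have fo: "f x = flow h3 x" if "x \<notin> nodes h1" "x \<notin> nodes h2" for x
    using fl1[symmetric] fl23[symmetric] that by (auto simp: fun_union_def f_def)
  have in1_3: "inf h1 y x = edge h3 y x (flow h3 y)" if "x \<in> nodes h1" "y \<in> nodes h3" for x y
  proof -
    have "inf h1 y x = outf h23 y x" using c1[of x y] that by auto
    also have "\<dots> = edge h23 y x (flow h23 y)"
      using that d1 by (intro outf_eq) (auto simp: h23_def)
    also have "\<dots> = edge h3 y x (flow h3 y)" using that d23 f23_3 by (auto simp: h23_def)
    finally show ?thesis .
  qed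
  have in2_3: "inf h2 y x = edge h3 y x (flow h3 y)" if "x \<in> nodes h2" "y \<in> nodes h3" for x y
  proof -
    have "inf h2 y x = outf h3 y x" using c23[of x y] that by auto
    also have "\<dots> = edge h3 y x (flow h3 y)" using that d23 by (intro outf_eq) auto
    finally show ?thesis .
  qed
  have in1_2: "outf h2 y x = inf h1 y x" if "x \<in> nodes h1" "y \<in> nodes h2" for x y
  proof -
    have "inf h1 y x = outf h23 y x" using c1[of x y] that by auto
    also have "\<dots> = edge h23 y x (flow h23 y)"
      using that d1 by (intro outf_eq) (auto simp: h23_def)
    also have "\<dots> = edge h2 y x (flow h2 y)" using that f23_2 by (auto simp: h23_def)
    also have "\<dots> = outf h2 y x" using that d1 by (intro outf_eq[symmetric]) auto
    finally show ?thesis by simp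
  qed
  have out1_2: "outf h1 x y = inf h2 x y" if "x \<in> nodes h1" "y \<in> nodes h2" for x y
    using c1[of x y] that d1 by (auto simp: h23_def)
  have out1_3: "outf h1 x y = inf h3 x y" if "x \<in> nodes h1" "y \<in> nodes h3" for x y
    using c1[of x y] that d1 d23 by (auto simp: h23_def)
  have comp12: "fg_compat h1 h2"
    unfolding fg_compat_def using d1 in1_2 out1_2 by auto
  have nU: "nodes U = nodes h1 \<union> nodes h2 \<union> nodes h3" by (auto simp: U_def h23_def)
  have n12: "nodes h12 = nodes h1 \<union> nodes h2" by (simp add: h12_def)
  have SX: "nodes h12 \<subseteq> nodes U" using nU n12 by auto
  have XS: "nodes U - nodes h12 = nodes h3" using nU n12 d1 d23 by auto
  note PU = flow_props[OF fm FU] and P12 = flow_props[OF fm F12]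
  have restr: "\<forall>x\<in>nodes h12. flow h12 x = flow U x"
  proof (rule restrict[OF fm FG_fin[OF FU] SX])
    show "\<And>y x. y \<in> nodes U \<Longrightarrow> fm_continuous (edge U y x)" using FG_cont[OF FU] by blast
    show "\<forall>x\<in>nodes U. flow U x = inflow U x + (\<Sum>y\<in>nodes U. edge U y x (flow U y))" using PU by blast
    show "\<forall>k. pre_fp (nodes U) (edge U) (inflow U) k \<longrightarrow> (\<forall>x\<in>nodes U. fm_le (flow U x) (k x))" using PU by blast
    show "\<forall>x\<in>nodes h12. flow h12 x = inflow h12 x + (\<Sum>y\<in>nodes h12. edge h12 y x (flow h12 y))" using P12 by blast
    show "\<forall>k. pre_fp (nodes h12) (edge h12) (inflow h12) k \<longrightarrow> (\<forall>x\<in>nodes h12. fm_le (flow h12 x) (k x))" using P12 by blast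
    show "\<And>y x. y \<in> nodes h12 \<Longrightarrow> x \<in> nodes h12 \<Longrightarrow> edge h12 y x = edge U y x"
      by (auto simp: h12_def U_def h23_def)
  next
    fix x assume x: "x \<in> nodes h12"
    have "inflow h12 x = fm_Lub (\<lambda>n. \<Sum>y\<in>{..<n} - (nodes U - nodes h3). inf h12 y x)"
      unfolding inflow_def using XS SX by (metis Diff_Diff_Int inf.absorb_iff2)
    also have "\<dots> = fm_Lub (\<lambda>n. \<Sum>y\<in>{..<n} - nodes U. inf h12 y x) + (\<Sum>y\<in>nodes h3. inf h12 y x)"
      by (rule isum_split[OF fm FG_fin[OF F3]]) (simp add: nU)
    also have "(\<lambda>n. \<Sum>y\<in>{..<n} - nodes U. inf h12 y x) = (\<lambda>n. \<Sum>y\<in>{..<n} - nodes U. inf U y x)"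
    proof (intro ext sum.cong refl)
      fix n y assume "y \<in> {..<n} - nodes U"
      then have y: "y \<notin> nodes h1" "y \<notin> nodes h2" "y \<notin> nodes h3" using nU by auto
      show "inf h12 y x = inf U y x"
      proof (cases "x \<in> nodes h1")
        case True then show ?thesis using y by (simp add: h12_def U_def h23_def)
      next
        case False then have "x \<in> nodes h2" using x n12 by auto
        then show ?thesis using y False by (simp add: h12_def U_def h23_def)
      qed
    qed
    also have "(\<Sum>y\<in>nodes h3. inf h12 y x) = (\<Sum>y\<in>nodes U - nodes h12. edge U y x (flow U y))"
      unfolding XS
    proof (rule sum.cong)
      fix y assume y: "y \<in> nodes h3"
      have "inf h12 y x = edge h3 y x (flow h3 y)"
        using x y d1 d23 in1_3 in2_3 by (auto simp: h12_def)
      also have "\<dots> = edge U y x (flow U y)"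
        using y d1 d23 fo[of y] by (auto simp: U_def h23_def f_def)
      finally show "inf h12 y x = edge U y x (flow U y)" .
    qed simp
    finally show "inflow h12 x = inflow U x + (\<Sum>y\<in>nodes U - nodes h12. edge U y x (flow U y))"
      unfolding inflow_def .
  qed
  have fl12: "flow h12 = fun_union (nodes h1) (flow h1) (flow h2)"
  proof
    fix x show "flow h12 x = fun_union (nodes h1) (flow h1) (flow h2) x"
    proof (cases "x \<in> nodes h12")
      case True
      then show ?thesis using restr f1 f2 by (auto simp: fun_union_def n12 f_def)
    next
      case False
      then show ?thesis using flow_undef[OF F12] flow_undef[OF F2] by (auto simp: fun_union_def n12)
    qed
  qed
  have def12: "fg_defined h1 h2"
    unfolding fg_defined_def using comp12 fl12 by (simp add: h12_def)
  have comp123: "fg_compat h12 h3"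
    unfolding fg_compat_def
  proof (intro conjI ballI)
    show "nodes h12 \<inter> nodes h3 = {}" using n12 d1 d23 by auto
  next
    fix x y assume x: "x \<in> nodes h12" and y: "y \<in> nodes h3"
    have "outf h12 x y = edge h12 x y (flow h12 x)"
      using x y d1 d23 n12 by (intro outf_eq) auto
    also have "\<dots> = inf h3 x y"
    proof (cases "x \<in> nodes h1")
      case True
      then have "edge h12 x y (flow h12 x) = outf h1 x y"
      proof -
        have "y \<notin> nodes h1" using y d1 by auto
        then show ?thesis using fl12 outf_eq[OF True, of y] True by (simp add: h12_def fun_union_def)
      qed
      then show ?thesis using out1_3 True y by simp
    next
      case False
      then have x2: "x \<in> nodes h2" using x n12 by auto
      then have "edge h12 x y (flow h12 x) = outf h2 x y"
      proof -
        have "y \<notin> nodes h2" using y d23 by auto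
        then show ?thesis using fl12 outf_eq[OF x2, of y] False by (simp add: h12_def fun_union_def)
      qed
      then show ?thesis using c23 x2 y by simp
    qed
    finally show "outf h12 x y = inf h3 x y" .
    have "outf h3 y x = edge h3 y x (flow h3 y)"
      using x y d1 d23 n12 by (intro outf_eq) auto
    also have "\<dots> = inf h12 y x"
      using x y d1 d23 n12 in1_3 in2_3 by (auto simp: h12_def)
    finally show "outf h3 y x = inf h12 y x" .
  qed
  have "fun_union (nodes h12) (flow h12) (flow h3) = flow (fg_union h12 h3)"
  proof -
    have "fg_union h12 h3 = U" by (simp add: h12_def U_def h23_def union_assoc)
    moreover have "fun_union (nodes h12) (flow h12) (flow h3) = flow U"
    proof
      fix x show "fun_union (nodes h12) (flow h12) (flow h3) x = flow U x"
        using restr fo n12 by (auto simp: fun_union_def f_def)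
    qed
    ultimately show ?thesis by simp
  qed
  then have "fg_defined h12 h3" unfolding fg_defined_def using comp123 by simp
  then show ?thesis using def12 by (simp add: h12_def)
qed
end

theorem lemma2:
  fixes h h1 h2 h3 :: "'m::comm_monoid_add flow_graph"
  assumes "flow_monoid TYPE('m)"
    and "h \<in> FG" and "h1 \<in> FG" and "h2 \<in> FG" and "h3 \<in> FG"
  shows "(h1 # h2 \<longrightarrow> h1 \<star> h2 \<in> FG)
       \<and> (h1 # h2 \<longleftrightarrow> h2 # h1) \<and> (h1 # h2 \<longrightarrow> h1 \<star> h2 = h2 \<star> h1)
       \<and> ((h2 # h3 \<and> h1 # (h2 \<star> h3)) \<longleftrightarrow> (h1 # h2 \<and> (h1 \<star> h2) # h3))
       \<and> (h2 # h3 \<and> h1 # (h2 \<star> h3) \<longrightarrow> h1 \<star> (h2 \<star> h3) = (h1 \<star> h2) \<star> h3)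
       \<and> fg_empty \<in> FG \<and> fg_empty # h \<and> fg_empty \<star> h = h"
proof -
  note fm = assms(1)
  have F: "h \<in> FG" "h1 \<in> FG" "h2 \<in> FG" "h3 \<in> FG" using assms by auto
  have disj: "fg_defined a b \<Longrightarrow> nodes a \<inter> nodes b = {}" for a b :: "'m flow_graph"
    unfolding fg_defined_def fg_compat_def by blast
  have c1: "fg_defined h1 h2 \<longrightarrow> fg_union h1 h2 \<in> FG" using F by (simp add: union_FG)
  have c2: "fg_defined h1 h2 \<longleftrightarrow> fg_defined h2 h1"
    using defined_sym[OF fm F(2,3)] defined_sym[OF fm F(3,2)] by blast
  have c3: "fg_defined h1 h2 \<longrightarrow> fg_union h1 h2 = fg_union h2 h1"
    using union_comm[OF F(2,3)] disj by blast
  have fwd: "fg_defined h2 h3 \<and> fg_defined h1 (fg_union h2 h3) \<Longrightarrow> fg_defined h1 h2 \<and> fg_defined (fg_union h1 h2) h3"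
    using forward[OF fm F(2,3,4)] by blast
  have bwd: "fg_defined h2 h3 \<and> fg_defined h1 (fg_union h2 h3)" if a: "fg_defined h1 h2 \<and> fg_defined (fg_union h1 h2) h3"
  proof -
    have F12: "fg_union h1 h2 \<in> FG" using F union_FG by blast
    have e21: "fg_defined h2 h1" using a defined_sym[OF fm F(2,3)] by blast
    have eq12: "fg_union h1 h2 = fg_union h2 h1" using a c3 by blast
    have "fg_defined h3 (fg_union h1 h2)" using a defined_sym[OF fm F12 F(4)] by blast
    then have "fg_defined h3 (fg_union h2 h1)" using eq12 by simp
    then have r: "fg_defined h3 h2 \<and> fg_defined (fg_union h3 h2) h1"
      using forward[OF fm F(4,3,2)] e21 by blast
    have F32: "fg_union h3 h2 \<in> FG" using F union_FG by blast
    have "fg_defined h2 h3" using r defined_sym[OF fm F(4,3)] by blast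
    moreover have "fg_defined h1 (fg_union h3 h2)" using r defined_sym[OF fm F32 F(2)] by blast
    moreover have "fg_union h3 h2 = fg_union h2 h3" using union_comm[OF F(4,3)] disj r by blast
    ultimately show ?thesis by simp
  qed
  have c4: "(fg_defined h2 h3 \<and> fg_defined h1 (fg_union h2 h3)) \<longleftrightarrow> (fg_defined h1 h2 \<and> fg_defined (fg_union h1 h2) h3)"
    using fwd bwd by blast
  have c6: "fg_defined fg_empty h"
    unfolding fg_defined_def fg_compat_def union_empty[OF F(1)]
    by (simp add: fg_empty_def fun_union_def)
  show ?thesis unfolding fg_comp_def
    using c1 c2 c3 c4 c6 union_assoc empty_FG union_empty[OF F(1)] by blast
qed

end
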